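(* Let $S$ be a semigroup and let $A$ be a skeleton of $S$. Then the subsemigroup $\langle A\rangle$ generated by $A$ is a regular subsemigroup of $S$.
   Context: For a nonempty set $X$ and a symbol $1\notin X$: elements of height $\ge 2$ are triples $g=(g^l,g^c,g^r)$; $\Gamma_0(X)=\{1\}$, $\Gamma_1(X)=X$, each $x\in X$ identified with $(1,x,1)$; for $i\ge 2$, $\Gamma_i(X)$ is the set of triples $g\in\Gamma_{i-1}(X)\times\Gamma_{i-2}(X)\times\Gamma_{i-1}(X)$ with $g^l\neq g^r$ and $g^c\in\{(g^l)^l,(g^l)^r\}\cap\{(g^r)^l,(g^r)^r\}$; $\Gamma(X)=\bigcup_{i\ge0}\Gamma_i(X)$. $S^1$ is $S$ with an identity adjoined if necessary; $E(\cdot)$ is the set of idempotents. For idempotents $e,f$ of a semigroup $R$, $S(e,f)=\{h\in E(R): fh=h=he,\ ehf=ef\}$. A skeleton mapping is a mapping $\phi:\Gamma(X)\to E(S^1)$ such that (i) $\phi|_X$ is one-to-one with $X\phi\subseteq E(S)$; (ii) $(1\phi)(g\phi)=g\phi=(g\phi)(1\phi)$ for all $g\in X$; (iii) $g\phi\in S\big((g^r\phi)(g^c\phi),(g^c\phi)(g^l\phi)\big)$ (in $S^1$) for all $g\in\Gamma_i(X)$, $i\ge2$. A skeleton of $S$ is a set of the form $(\Gamma(X)\setminus\{1\})\phi$ for some nonempty set $X$ and some skeleton mapping $\phi:\Gamma(X)\to E(S^1)$. *)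

theory Defs
  imports Main
begin

text \<open>Elements of Gamma(X): the symbol 1 (One), the elements of X (Leaf x, identified
  with the triple (1,x,1)), and triples (Tri l c r) of height at least 2.\<close>

datatype 'x gam = One | Leaf 'x | Tri "'x gam" "'x gam" "'x gam"

fun gl :: "'x gam \<Rightarrow> 'x gam" where
  "gl One = One"
| "gl (Leaf x) = One"
| "gl (Tri l c r) = l"

fun gr :: "'x gam \<Rightarrow> 'x gam" where
  "gr One = One"
| "gr (Leaf x) = One"
| "gr (Tri l c r) = r"

fun gc :: "'x gam \<Rightarrow> 'x gam" where
  "gc One = One"
| "gc (Leaf x) = Leaf x"
| "gc (Tri l c r) = c"

fun Gam :: "'x set \<Rightarrow> nat \<Rightarrow> 'x gam set" where
  "Gam X 0 = {One}"
| "Gam X (Suc 0) = Leaf ` X"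
| "Gam X (Suc (Suc i)) =
     {Tri l c r | l c r. l \<in> Gam X (Suc i) \<and> c \<in> Gam X i \<and> r \<in> Gam X (Suc i)
        \<and> l \<noteq> r \<and> c \<in> {gl l, gr l} \<inter> {gl r, gr r}}"

definition Gamma :: "'x set \<Rightarrow> 'x gam set" where
  "Gamma X = (\<Union>i. Gam X i)"

text \<open>The semigroup S is the whole type 'a. S^1 is modelled inside 'a option:
  Some a represents a in S, None is the adjoined identity, which belongs to S^1
  only if S has no identity.\<close>

definition has_identity :: "'a::semigroup_mult itself \<Rightarrow> bool" where
  "has_identity _ \<longleftrightarrow> (\<exists>e::'a. \<forall>x. e * x = x \<and> x * e = x)"

definition S1 :: "'a::semigroup_mult option set" where
  "S1 = (if has_identity TYPE('a) then Some ` UNIV else UNIV)"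

fun omul :: "'a::semigroup_mult option \<Rightarrow> 'a option \<Rightarrow> 'a option" where
  "omul None y = y"
| "omul (Some a) None = Some a"
| "omul (Some a) (Some b) = Some (a * b)"

definition E1 :: "'a::semigroup_mult option set" where
  "E1 = {u \<in> S1. omul u u = u}"

definition ES :: "'a::semigroup_mult set" where
  "ES = {a. a * a = a}"

definition sandwich :: "'a::semigroup_mult option \<Rightarrow> 'a option \<Rightarrow> 'a option set" where
  "sandwich e f = {h \<in> E1. omul f h = h \<and> omul h e = h
                      \<and> omul (omul e h) f = omul e f}"

definition skeleton_mapping :: "'x set \<Rightarrow> ('x gam \<Rightarrow> 'a::semigroup_mult option) \<Rightarrow> bool" where
  "skeleton_mapping X \<phi> \<longleftrightarrow>
     (\<forall>g \<in> Gamma X. \<phi> g \<in> E1)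
   \<and> inj_on \<phi> (Leaf ` X) \<and> \<phi> ` (Leaf ` X) \<subseteq> Some ` ES
   \<and> (\<forall>x \<in> X. omul (\<phi> One) (\<phi> (Leaf x)) = \<phi> (Leaf x) \<and> omul (\<phi> (Leaf x)) (\<phi> One) = \<phi> (Leaf x))
   \<and> (\<forall>i\<ge>2. \<forall>g \<in> Gam X i.
        \<phi> g \<in> sandwich (omul (\<phi> (gr g)) (\<phi> (gc g))) (omul (\<phi> (gc g)) (\<phi> (gl g))))"

inductive_set generated :: "'a::semigroup_mult set \<Rightarrow> 'a set" for A where
  gen_base: "a \<in> A \<Longrightarrow> a \<in> generated A"
| gen_mult: "a \<in> generated A \<Longrightarrow> b \<in> generated A \<Longrightarrow> a * b \<in> generated A"

definition regular_subsemigroup :: "'a::semigroup_mult set \<Rightarrow> bool" where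
  "regular_subsemigroup T \<longleftrightarrow>
     (\<forall>a\<in>T. \<forall>b\<in>T. a * b \<in> T) \<and> (\<forall>a\<in>T. \<exists>x\<in>T. a * x * a = a)"

end

theory Submission
  imports Defs
begin


fun ht :: "'x gam \<Rightarrow> nat" where
  "ht One = 0"
| "ht (Leaf x) = 1"
| "ht (Tri l c r) = Suc (ht l)"

fun comps :: "'x gam \<Rightarrow> 'x gam set" where
  "comps (Tri l c r) = {l, r}"
| "comps One = {}"
| "comps (Leaf x) = {}"

fun zp :: "'x gam list \<Rightarrow> 'x gam \<Rightarrow> 'x gam list" where
  "zp [] l = [l]"
| "zp [c] l = [l]"
| "zp (c # h # rest) l = (if l = h then h # rest else l # zp (h # rest) (Tri l c h))"

lemma zp_ne: "zp ch l \<noteq> []"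
  by (induction ch l rule: zp.induct) auto

lemma omul_None_right: "omul a None = a"
  by (cases a) auto

lemma omul_Some_ne: "omul a (Some b) \<noteq> None"
  by (cases a) auto

lemma Gam_ht: "g \<in> Gam X i \<Longrightarrow> ht g = i"
proof (induction i arbitrary: g rule: less_induct)
  case (less i)
  show ?case
  proof (cases i)
    case 0 then show ?thesis using less by simp
  next
    case (Suc j)
    show ?thesis
    proof (cases j)
      case 0 then show ?thesis using less Suc by auto
    next
      case (Suc k)
      with \<open>i = Suc j\<close> less obtain l c r where "g = Tri l c r" "l \<in> Gam X (Suc k)" by auto
      moreover have "ht l = Suc k" using less.IH \<open>i = Suc j\<close> Suc calculation(2) by simp
      ultimately show ?thesis using \<open>i = Suc j\<close> Suc by simp
    qed
  qed
qed

lemma One_notin_Suc: "One \<notin> Gam X (Suc j)"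
  by (cases j) auto

lemma Gamma_Gam: "g \<in> Gamma X \<Longrightarrow> g \<in> Gam X (ht g)"
  unfolding Gamma_def using Gam_ht by fastforce

lemma Gam_Gamma: "g \<in> Gam X i \<Longrightarrow> g \<in> Gamma X"
  unfolding Gamma_def by auto

lemma Tri_Gam_D:
  assumes "Tri l c r \<in> Gam X i"
  shows "\<exists>j. i = Suc (Suc j) \<and> l \<in> Gam X (Suc j) \<and> c \<in> Gam X j \<and> r \<in> Gam X (Suc j)
           \<and> l \<noteq> r \<and> c \<in> {gl l, gr l} \<and> c \<in> {gl r, gr r}"
proof (cases i)
  case 0 then show ?thesis using assms by simp
next
  case (Suc j)
  then show ?thesis
  proof (cases j)
    case 0 then show ?thesis using assms Suc by auto
  next
    case (Suc k) then show ?thesis using assms \<open>i = Suc j\<close> by auto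
  qed
qed

lemma Tri_Gamma_D:
  assumes "Tri l c r \<in> Gamma X"
  shows "l \<in> Gamma X \<and> c \<in> Gamma X \<and> r \<in> Gamma X \<and> l \<noteq> r \<and> ht l = Suc (ht c)
         \<and> ht r = Suc (ht c) \<and> c \<in> {gl l, gr l} \<and> c \<in> {gl r, gr r} \<and> l \<noteq> One \<and> r \<noteq> One"
proof -
  obtain i where "Tri l c r \<in> Gam X i" using assms unfolding Gamma_def by auto
  from Tri_Gam_D[OF this] obtain j where j: "l \<in> Gam X (Suc j)" "c \<in> Gam X j" "r \<in> Gam X (Suc j)"
    "l \<noteq> r" "c \<in> {gl l, gr l}" "c \<in> {gl r, gr r}" by blast
  then show ?thesis using Gam_Gamma Gam_ht One_notin_Suc by metis
qed

lemma comps_D: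
  assumes "h \<in> Gamma X" "c \<in> comps h"
  shows "c \<in> Gamma X \<and> c \<noteq> One \<and> ht h = Suc (ht c) \<and> c \<in> {gl h, gr h}"
proof (cases h)
  case One then show ?thesis using assms by simp
next
  case (Leaf x) then show ?thesis using assms by simp
next
  case (Tri l c0 r)
  then show ?thesis using assms Tri_Gamma_D[of l c0 r X] by auto
qed

lemma comps_glgr: "c \<in> comps h \<Longrightarrow> c \<in> {gl h, gr h}"
  by (cases h) auto

lemma Tri_mk:
  assumes "l \<in> Gamma X" "h \<in> Gamma X" "c \<in> comps l" "c \<in> comps h" "l \<noteq> h"
  shows "Tri l c h \<in> Gamma X"
proof -
  have a: "ht l = Suc (ht c)" "ht h = Suc (ht c)" "c \<in> Gamma X"
    using comps_D assms by blast+
  have "l \<in> Gam X (Suc (ht c))" "h \<in> Gam X (Suc (ht c))" "c \<in> Gam X (ht c)"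
    using Gamma_Gam assms a by metis+
  moreover have "c \<in> {gl l, gr l}" "c \<in> {gl h, gr h}" using comps_glgr assms by blast+
  ultimately have "Tri l c h \<in> Gam X (Suc (Suc (ht c)))" using assms(5) by auto
  then show ?thesis by (rule Gam_Gamma)
qed

lemma Tri_leaf_mk:
  assumes "x \<in> X" "y \<in> X" "x \<noteq> y"
  shows "Tri (Leaf x) One (Leaf y) \<in> Gamma X"
proof -
  have "Tri (Leaf x) One (Leaf y) \<in> Gam X (Suc (Suc 0))" using assms by auto
  then show ?thesis by (rule Gam_Gamma)
qed

lemma Tri_center:
  assumes "Tri l c r \<in> Gamma X" "c \<noteq> One"
  shows "c \<in> comps l \<and> c \<in> comps r"
proof -
  have "c \<in> {gl l, gr l}" "c \<in> {gl r, gr r}" using Tri_Gamma_D[OF assms(1)] by auto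
  then show ?thesis using assms(2) by (cases l; cases r) auto
qed

lemma leaf_Gamma: "Leaf x \<in> Gamma X \<Longrightarrow> x \<in> X"
proof -
  assume "Leaf x \<in> Gamma X"
  then have "Leaf x \<in> Gam X 1" using Gamma_Gam by fastforce
  then show ?thesis by auto
qed

lemma Tri_One:
  assumes "Tri l One r \<in> Gamma X"
  shows "\<exists>x y. l = Leaf x \<and> r = Leaf y \<and> x \<in> X \<and> y \<in> X"
proof -
  have "ht l = 1" "ht r = 1" "l \<in> Gamma X" "r \<in> Gamma X" using Tri_Gamma_D[OF assms] by auto
  then have "l \<in> Gam X 1" "r \<in> Gam X 1" using Gamma_Gam by metis+
  then show ?thesis by auto
qed



locale skel =
  fixes X :: "'x set" and phi :: "'x gam \<Rightarrow> 'a::semigroup_mult option"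
  assumes sk: "skeleton_mapping X phi"
begin

lemma sk_E1: "g \<in> Gamma X \<Longrightarrow> phi g \<in> E1"
  using sk unfolding skeleton_mapping_def by blast

lemma sk_sand: "g \<in> Gam X i \<Longrightarrow> 2 \<le> i \<Longrightarrow>
  phi g \<in> sandwich (omul (phi (gr g)) (phi (gc g))) (omul (phi (gc g)) (phi (gl g)))"
  using sk unfolding skeleton_mapping_def by blast

lemma sk_one: "x \<in> X \<Longrightarrow> omul (phi One) (phi (Leaf x)) = phi (Leaf x) \<and> omul (phi (Leaf x)) (phi One) = phi (Leaf x)"
  using sk unfolding skeleton_mapping_def by blast

lemma sk_leaf: "x \<in> X \<Longrightarrow> phi (Leaf x) \<noteq> None"
proof -
  assume "x \<in> X"
  then have "phi (Leaf x) \<in> Some ` ES" using sk unfolding skeleton_mapping_def by blast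
  then show ?thesis by auto
qed

lemma notNone: "g \<in> Gam X i \<Longrightarrow> g \<noteq> One \<Longrightarrow> phi g \<noteq> None"
proof (induction i arbitrary: g rule: less_induct)
  case (less i)
  show ?case
  proof (cases i)
    case 0 then show ?thesis using less by simp
  next
    case (Suc j)
    show ?thesis
    proof (cases j)
      case 0 then show ?thesis using less Suc sk_leaf by auto
    next
      case (Suc k)
      with \<open>i = Suc j\<close> less obtain l c r where g: "g = Tri l c r" "l \<in> Gam X (Suc k)" by auto
      have "phi l \<noteq> None" using less.IH \<open>i = Suc j\<close> Suc g(2) One_notin_Suc by blast
      then obtain b where b: "phi l = Some b" by auto
      have "phi g \<in> sandwich (omul (phi r) (phi c)) (omul (phi c) (phi l))"
        using sk_sand[OF less.prems(1)] \<open>i = Suc j\<close> Suc g(1) by simp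
      then have eq: "omul (omul (phi c) (phi l)) (phi g) = phi g" unfolding sandwich_def by blast
      show ?thesis
      proof
        assume "phi g = None"
        with eq have "omul (phi c) (phi l) = None" by (simp add: omul_None_right)
        with b omul_Some_ne show False by metis
      qed
    qed
  qed
qed

definition psi :: "'x gam \<Rightarrow> 'a" where "psi g = the (phi g)"

lemma phi_psi: "g \<in> Gamma X \<Longrightarrow> g \<noteq> One \<Longrightarrow> phi g = Some (psi g)"
  using notNone Gamma_Gam unfolding psi_def by fastforce

lemma psi_idem: "g \<in> Gamma X \<Longrightarrow> g \<noteq> One \<Longrightarrow> psi g * psi g = psi g"
  using sk_E1[of g] phi_psi[of g] unfolding E1_def by auto

lemma sand2:
  assumes "g = Tri l One r" "g \<in> Gamma X"
  shows "psi l * psi g = psi g \<and> psi g * psi r = psi g \<and> psi r * (psi g * psi l) = psi r * psi l"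
proof -
  obtain x y where xy: "l = Leaf x" "r = Leaf y" "x \<in> X" "y \<in> X" using Tri_One assms by blast
  have "g \<in> Gam X (ht g)" using Gamma_Gam assms(2) .
  moreover have "ht g = 2" using assms(1) xy by simp
  ultimately have "phi g \<in> sandwich (omul (phi r) (phi One)) (omul (phi One) (phi l))"
    using sk_sand[of g "ht g"] assms(1) by simp
  then have "phi g \<in> sandwich (phi r) (phi l)" using sk_one xy by simp
  moreover have "l \<in> Gamma X" "r \<in> Gamma X" "l \<noteq> One" "r \<noteq> One"
    using Tri_Gamma_D assms by blast+
  ultimately show ?thesis using phi_psi assms unfolding sandwich_def
    by (auto simp: mult.assoc)
qed

lemma sand3:
  assumes "g = Tri l c r" "g \<in> Gamma X" "c \<noteq> One"
  shows "psi c * (psi l * psi g) = psi g \<and> psi g * (psi r * psi c) = psi g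
    \<and> psi r * (psi c * (psi g * (psi c * psi l))) = psi r * (psi c * psi l)"
proof -
  have "g \<in> Gam X (ht g)" using Gamma_Gam assms(2) .
  moreover have "2 \<le> ht g" using assms(1) Tri_Gamma_D[of l c r X] assms(2) by simp
  ultimately have "phi g \<in> sandwich (omul (phi r) (phi c)) (omul (phi c) (phi l))"
    using sk_sand[of g "ht g"] assms(1) by simp
  moreover have "l \<in> Gamma X" "r \<in> Gamma X" "l \<noteq> One" "r \<noteq> One" "c \<in> Gamma X"
    using Tri_Gamma_D assms by blast+
  moreover have "psi c * psi c = psi c" using psi_idem calculation assms(3) by blast
  moreover have "psi c * (psi c * psi l) = psi c * psi l" using calculation by (metis mult.assoc)
  ultimately show ?thesis using phi_psi assms unfolding sandwich_def
    by (auto simp: mult.assoc)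
qed

lemma center_abs:
  assumes "g = Tri l c r" "g \<in> Gamma X" "c \<noteq> One"
  shows "psi c * psi g = psi g" "psi g * psi c = psi g"
proof -
  have c: "c \<in> Gamma X" using Tri_Gamma_D assms by blast
  have ci: "psi c * psi c = psi c" using psi_idem c assms(3) by blast
  from sand3[OF assms] have a: "psi c * (psi l * psi g) = psi g" and b: "psi g * (psi r * psi c) = psi g" by auto
  have "psi c * psi g = psi c * (psi c * (psi l * psi g))" using a by simp
  also have "\<dots> = psi g" using ci a by (metis mult.assoc)
  finally show "psi c * psi g = psi g" .
  have "psi g * psi c = (psi g * (psi r * psi c)) * psi c" using b by simp
  also have "\<dots> = psi g" using ci b by (metis mult.assoc)
  finally show "psi g * psi c = psi g" .
qed

lemma rgl:
  assumes "g = Tri l c r" "g \<in> Gamma X" "c \<noteq> One"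
  shows "psi r * (psi g * psi l) = psi r * (psi c * psi l)"
proof -
  from sand3[OF assms] have "psi r * (psi c * (psi g * (psi c * psi l))) = psi r * (psi c * psi l)" by auto
  moreover have "psi c * (psi g * (psi c * psi l)) = psi g * psi l"
    using center_abs[OF assms] by (metis mult.assoc)
  ultimately show ?thesis by simp
qed

lemma comp_absorb:
  assumes "h \<in> Gamma X" "c \<in> comps h"
  shows "psi h * (psi c * psi h) = psi h"
proof -
  obtain l c0 r where h: "h = Tri l c0 r" using assms(2) by (cases h) auto
  have hi: "psi h * psi h = psi h" using psi_idem assms(1) h by blast
  have cc: "c = l \<or> c = r" using assms(2) h by auto
  show ?thesis
  proof (cases "c0 = One")
    case True
    then have s: "psi l * psi h = psi h" "psi h * psi r = psi h" "psi r * (psi h * psi l) = psi r * psi l"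
      using sand2[of h l r] h True assms(1) by auto
    have "psi h * (psi r * (psi l * psi h)) = psi h * (psi r * (psi h * psi l)) * psi h"
      using s(3) by (simp add: mult.assoc)
    also have "\<dots> = (psi h * psi r) * psi h * (psi l * psi h)" by (simp add: mult.assoc)
    also have "\<dots> = psi h" using s hi by simp
    finally have k: "psi h * (psi r * (psi l * psi h)) = psi h" .
    have "psi h * (psi r * psi h) = psi h" using k s(1) by simp
    moreover have "psi h * (psi l * psi h) = psi h" using k s(2) by (metis mult.assoc)
    ultimately show ?thesis using cc by auto
  next
    case False
    then have s: "psi c0 * (psi l * psi h) = psi h" "psi h * (psi r * psi c0) = psi h"
      "psi r * (psi c0 * (psi h * (psi c0 * psi l))) = psi r * (psi c0 * psi l)"
      using sand3[of h l c0 r] h assms(1) by auto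
    have "psi h * (psi r * (psi c0 * (psi l * psi h))) = psi h * (psi r * (psi c0 * (psi h * (psi c0 * psi l)))) * psi h"
      using s(3) by (simp add: mult.assoc)
    also have "\<dots> = (psi h * (psi r * psi c0)) * psi h * (psi c0 * (psi l * psi h))" by (simp add: mult.assoc)
    also have "\<dots> = psi h" using s hi by simp
    finally have k: "psi h * (psi r * (psi c0 * (psi l * psi h))) = psi h" .
    have "psi h * (psi r * psi h) = psi h" using k s(1) by simp
    moreover have "psi h * (psi l * psi h) = psi h" using k s(2) by (metis mult.assoc)
    ultimately show ?thesis using cc by auto
  qed
qed

end


context skel
begin

definition TT :: "'a set" where "TT = generated (psi ` (Gamma X - {One}))"

lemma psi_TT: "g \<in> Gamma X \<Longrightarrow> g \<noteq> One \<Longrightarrow> psi g \<in> TT"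
  unfolding TT_def by (rule gen_base) auto

lemma TT_mult: "a \<in> TT \<Longrightarrow> b \<in> TT \<Longrightarrow> a * b \<in> TT"
  unfolding TT_def by (rule gen_mult)

definition Ldv :: "'a \<Rightarrow> 'a \<Rightarrow> bool" where
  "Ldv a b \<longleftrightarrow> a = b \<or> (\<exists>s\<in>TT. a = s * b)"

definition Lr :: "'a \<Rightarrow> 'a \<Rightarrow> bool" where
  "Lr a b \<longleftrightarrow> Ldv a b \<and> Ldv b a"

lemma Lr_refl: "Lr a a" unfolding Lr_def Ldv_def by simp

lemma Lr_eq: "a = b \<Longrightarrow> Lr a b" using Lr_refl by simp

lemma Ldv_trans: "Ldv a b \<Longrightarrow> Ldv b c \<Longrightarrow> Ldv a c"
  unfolding Ldv_def by (metis TT_mult mult.assoc)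

lemma Lr_trans: "Lr a b \<Longrightarrow> Lr b c \<Longrightarrow> Lr a c"
  unfolding Lr_def using Ldv_trans by blast

lemma Ldv_rmult: "Ldv a b \<Longrightarrow> Ldv (a * z) (b * z)"
  unfolding Ldv_def by (auto simp: mult.assoc)

lemma Lr_rmult: "Lr a b \<Longrightarrow> Lr (a * z) (b * z)"
  unfolding Lr_def using Ldv_rmult by blast

fun chn :: "'x gam list \<Rightarrow> bool" where
  "chn [] = False"
| "chn [g] = (g \<in> Gamma X \<and> g \<noteq> One)"
| "chn (g # h # rest) = (g \<in> Gamma X \<and> g \<noteq> One \<and> g \<in> comps h \<and> chn (h # rest))"

fun pr :: "'x gam list \<Rightarrow> 'a" where
  "pr [] = undefined"
| "pr [g] = psi g"
| "pr (g # h # rest) = pr (h # rest) * psi g"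

lemma pr_cons: "ch \<noteq> [] \<Longrightarrow> pr (g # ch) = pr ch * psi g"
  by (cases ch) auto

lemma chn_hd: "chn ch \<Longrightarrow> hd ch \<in> Gamma X \<and> hd ch \<noteq> One"
  by (cases ch rule: chn.cases) auto

lemma chn_cons: "ch \<noteq> [] \<Longrightarrow> chn (g # ch) \<longleftrightarrow> g \<in> Gamma X \<and> g \<noteq> One \<and> g \<in> comps (hd ch) \<and> chn ch"
  by (cases ch) auto

lemma pr_hd:
  assumes "chn ch" shows "pr ch * psi (hd ch) = pr ch"
  using assms
proof (cases ch rule: chn.cases)
  case (2 g) then show ?thesis using psi_idem assms by simp
next
  case (3 g h rest)
  then have "psi g * psi g = psi g" using psi_idem assms by auto
  then show ?thesis using 3 by (simp add: mult.assoc)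
qed auto

lemma zipR:
  "chn ch \<Longrightarrow> l \<in> Gamma X \<Longrightarrow> hd ch \<in> comps l \<Longrightarrow>
   chn (zp ch l) \<and> hd (zp ch l) = l \<and> Lr (pr ch * psi l) (pr (zp ch l))"
proof (induction ch l rule: zp.induct)
  case (1 l) then show ?case by simp
next
  case (2 c l)
  have lO: "l \<noteq> One" using 2 by auto
  have c: "c \<in> Gamma X" "c \<noteq> One" using 2 by auto
  have "psi l * (psi c * psi l) = psi l" using comp_absorb 2 by simp
  then have "Ldv (psi l) (psi c * psi l)" unfolding Ldv_def using psi_TT[OF 2(2) lO]
    by (metis mult.assoc)
  moreover have "Ldv (psi c * psi l) (psi l)" unfolding Ldv_def using psi_TT[OF c] by blast
  ultimately show ?case using 2 lO by (simp add: Lr_def)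
next
  case (3 c h rest l)
  have chh: "chn (h # rest)" and cG: "c \<in> Gamma X" "c \<noteq> One" and ch: "c \<in> comps h"
    using 3 by auto
  have hG: "h \<in> Gamma X" "h \<noteq> One" using chn_hd[OF chh] by auto
  have lO: "l \<noteq> One" using 3 by auto
  have cl: "c \<in> comps l" using 3 by simp
  have prh: "pr (h # rest) * psi h = pr (h # rest)" using pr_hd[OF chh] by simp
  show ?case
  proof (cases "l = h")
    case True
    have "pr (c # h # rest) * psi l = pr (h # rest) * psi h * (psi c * psi h)"
      using True prh by (simp add: mult.assoc)
    also have "\<dots> = pr (h # rest)" using comp_absorb[OF hG(1) ch] prh by (metis mult.assoc)
    finally show ?thesis using True chh by (simp add: Lr_eq)
  next
    case False
    define G where "G = Tri l c h"
    have GG: "G \<in> Gamma X" unfolding G_def using Tri_mk 3(3) hG(1) cl ch False by blast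
    have hcG: "hd (h # rest) \<in> comps G" unfolding G_def by simp
    from 3(1)[OF False chh GG[unfolded G_def] hcG[unfolded G_def]]
    have IH: "chn (zp (h # rest) G)" "hd (zp (h # rest) G) = G"
      "Lr (pr (h # rest) * psi G) (pr (zp (h # rest) G))" unfolding G_def by auto
    have zne: "zp (h # rest) G \<noteq> []" by (rule zp_ne)
    have eq: "pr (c # h # rest) * psi l = pr (h # rest) * psi G * psi l"
    proof -
      have "pr (c # h # rest) * psi l = pr (h # rest) * (psi h * (psi c * psi l))"
        using prh by (metis mult.assoc pr.simps(3))
      also have "\<dots> = pr (h # rest) * (psi h * (psi G * psi l))"
        using rgl[of G l c h] G_def GG cG(2) by simp
      also have "\<dots> = pr (h # rest) * psi G * psi l" using prh by (metis mult.assoc)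
      finally show ?thesis .
    qed
    have "Lr (pr (c # h # rest) * psi l) (pr (zp (h # rest) G) * psi l)"
      using eq Lr_rmult[OF IH(3)] by simp
    moreover have "pr (zp (h # rest) G) * psi l = pr (l # zp (h # rest) G)"
      using pr_cons[OF zne] by simp
    moreover have "chn (l # zp (h # rest) G)"
      using chn_cons[OF zne] IH 3(3) lO unfolding G_def by simp
    ultimately show ?thesis using False G_def by simp
  qed
qed

end


context skel
begin

lemma leafR:
  assumes "chn ch" "hd ch = Leaf y" "x \<in> X"
  shows "\<exists>ch'. chn ch' \<and> hd ch' = Leaf x \<and> Lr (pr ch * psi (Leaf x)) (pr ch')"
proof -
  have yX: "y \<in> X" using chn_hd[OF assms(1)] assms(2) leaf_Gamma by metis
  have prh: "pr ch * psi (Leaf y) = pr ch" using pr_hd[OF assms(1)] assms(2) by simp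
  show ?thesis
  proof (cases "x = y")
    case True
    have e: "pr ch * psi (Leaf x) = pr ch" using prh True by simp
    have "hd ch = Leaf x" using assms(2) True by simp
    show ?thesis
      apply (rule exI[of _ ch])
      apply (intro conjI)
        apply (rule assms(1))
       apply (rule \<open>hd ch = Leaf x\<close>)
      apply (rule Lr_eq)
      apply (rule e)
      done
  next
    case False
    define G where "G = Tri (Leaf x) One (Leaf y)"
    have GG: "G \<in> Gamma X" unfolding G_def using assms(3) yX False by (rule Tri_leaf_mk)
    have s: "psi (Leaf y) * (psi G * psi (Leaf x)) = psi (Leaf y) * psi (Leaf x)"
      using sand2[of G "Leaf x" "Leaf y"] GG G_def by auto
    have hG: "hd ch \<in> comps G" using assms(2) G_def by simp
    from zipR[OF assms(1) GG hG] have Z: "chn (zp ch G)" "hd (zp ch G) = G"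
      "Lr (pr ch * psi G) (pr (zp ch G))" by auto
    have zne: "zp ch G \<noteq> []" by (rule zp_ne)
    have eq: "pr ch * psi (Leaf x) = pr ch * psi G * psi (Leaf x)"
    proof -
      have "pr ch * psi (Leaf x) = pr ch * (psi (Leaf y) * psi (Leaf x))" using prh by (metis mult.assoc)
      also have "\<dots> = pr ch * (psi (Leaf y) * (psi G * psi (Leaf x)))" using s by simp
      also have "\<dots> = pr ch * psi G * psi (Leaf x)" using prh by (metis mult.assoc)
      finally show ?thesis .
    qed
    have xG: "Leaf x \<in> Gamma X" using GG Tri_Gamma_D unfolding G_def by blast
    have "chn (Leaf x # zp ch G)" using chn_cons[OF zne] Z xG unfolding G_def by simp
    moreover have "Lr (pr ch * psi (Leaf x)) (pr (Leaf x # zp ch G))"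
      using eq Lr_rmult[OF Z(3)] pr_cons[OF zne] by simp
    ultimately show ?thesis by (intro exI[of _ "Leaf x # zp ch G"]) simp
  qed
qed

lemma extR: "chn ch \<Longrightarrow> \<exists>ch'. chn ch' \<and> (\<exists>y. hd ch' = Leaf y) \<and> pr ch' = pr ch"
proof (induction "ht (hd ch)" arbitrary: ch rule: less_induct)
  case less
  have bG: "hd ch \<in> Gamma X" "hd ch \<noteq> One" using chn_hd[OF less.prems] by auto
  have prh: "pr ch * psi (hd ch) = pr ch" using pr_hd[OF less.prems] .
  have ne: "ch \<noteq> []" using less.prems by auto
  show ?case
  proof (cases "hd ch")
    case One then show ?thesis using bG by simp
  next
    case (Leaf y)
    show ?thesis by (rule exI[of _ ch]) (intro conjI less.prems exI[of _ y] Leaf refl)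
  next
    case (Tri l c r)
    have D: "l \<in> Gamma X" "r \<in> Gamma X" "r \<noteq> One" "c \<in> Gamma X"
      using Tri_Gamma_D bG(1) Tri by (metis)+
    show ?thesis
    proof (cases "c = One")
      case True
      then obtain y where y: "r = Leaf y" using Tri_One[of l r X] bG(1) Tri True by auto
      have s: "psi (hd ch) * psi r = psi (hd ch)" using sand2[of "hd ch" l r] Tri True bG by auto
      have "chn (r # ch)" using chn_cons[OF ne] less.prems D Tri by simp
      moreover have "pr (r # ch) = pr ch" using pr_cons[OF ne] prh s by (metis mult.assoc)
      ultimately show ?thesis using y by (intro exI[of _ "r # ch"]) simp
    next
      case False
      have s: "psi (hd ch) * (psi r * psi c) = psi (hd ch)" using sand3[of "hd ch" l c r] Tri False bG by auto
      have cr: "c \<in> comps r" using Tri_center bG(1) Tri False by metis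
      have ch1: "chn (c # r # ch)" using chn_cons[OF ne] less.prems D Tri cr False by simp
      have p1: "pr (c # r # ch) = pr ch"
      proof -
        have "pr (c # r # ch) = pr ch * psi r * psi c" using pr_cons[OF ne] by simp
        also have "\<dots> = pr ch * (psi (hd ch) * (psi r * psi c))" using prh by (metis mult.assoc)
        also have "\<dots> = pr ch" using s prh by simp
        finally show ?thesis .
      qed
      have "ht c < ht (hd ch)" using Tri Tri_Gamma_D[of l c r X] bG(1) by simp
      from less.hyps[OF _ ch1] this obtain ch' where o: "chn ch'" "\<exists>y. hd ch' = Leaf y" "pr ch' = pr (c # r # ch)"
        by auto
      have e: "pr ch' = pr ch" using o(3) p1 by simp
      show ?thesis by (rule exI[of _ ch'], intro conjI o(1) o(2) e)
    qed
  qed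
qed

end


context skel
begin

lemma genR: "g \<in> Gamma X \<Longrightarrow> g \<noteq> One \<Longrightarrow> chn ch \<Longrightarrow>
  \<exists>ch'. chn ch' \<and> hd ch' = g \<and> Lr (pr ch * psi g) (pr ch')"
proof (induction "ht g" arbitrary: g ch rule: less_induct)
  case less
  show ?case
  proof (cases g)
    case One then show ?thesis using less by simp
  next
    case (Leaf x)
    have xX: "x \<in> X" using less.prems Leaf leaf_Gamma by metis
    obtain ch0 y where c0: "chn ch0" "hd ch0 = Leaf y" "pr ch0 = pr ch" using extR[OF less.prems(3)] by blast
    from leafR[OF c0(1,2) xX] obtain ch' where "chn ch'" "hd ch' = Leaf x" "Lr (pr ch0 * psi (Leaf x)) (pr ch')" by blast
    then show ?thesis using c0 Leaf by auto
  next
    case (Tri l c r)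
    have D: "l \<in> Gamma X" "l \<noteq> One" "c \<in> Gamma X" using Tri_Gamma_D less.prems(1) Tri by metis+
    have lg: "l \<in> comps g" using Tri by simp
    have htl: "ht l < ht g" using Tri by simp
    show ?thesis
    proof (cases "c = One")
      case True
      have s: "psi l * psi g = psi g" using sand2[of g l r] Tri True less.prems by auto
      obtain ch1 where c1: "chn ch1" "hd ch1 = l" "Lr (pr ch * psi l) (pr ch1)"
        using less.hyps[OF htl D(1,2) less.prems(3)] by blast
      obtain ch2 where c2: "chn ch2" "hd ch2 = g" "Lr (pr ch1 * psi g) (pr ch2)"
        using zipR[OF c1(1) less.prems(1)] c1(2) lg by blast
      have "Lr (pr ch * psi g) (pr ch1 * psi g)" using Lr_rmult[OF c1(3), of "psi g"] s
        by (simp add: mult.assoc)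
      then show ?thesis using c2 Lr_trans by blast
    next
      case False
      have s: "psi c * (psi l * psi g) = psi g" using sand3[of g l c r] Tri False less.prems by auto
      have cl: "c \<in> comps l" using Tri_center less.prems(1) Tri False by metis
      have htc: "ht c < ht g" using Tri Tri_Gamma_D[of l c r X] less.prems(1) by simp
      obtain ch1 where c1: "chn ch1" "hd ch1 = c" "Lr (pr ch * psi c) (pr ch1)"
        using less.hyps[OF htc D(3) False less.prems(3)] by blast
      obtain ch2 where c2: "chn ch2" "hd ch2 = l" "Lr (pr ch1 * psi l) (pr ch2)"
        using zipR[OF c1(1) D(1)] c1(2) cl by blast
      obtain ch3 where c3: "chn ch3" "hd ch3 = g" "Lr (pr ch2 * psi g) (pr ch3)"
        using zipR[OF c2(1) less.prems(1)] c2(2) lg by blast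
      have "Lr (pr ch * psi g) (pr ch1 * psi l * psi g)"
        using Lr_rmult[OF Lr_rmult[OF c1(3), of "psi l"], of "psi g"] s by (simp add: mult.assoc)
      moreover have "Lr (pr ch1 * psi l * psi g) (pr ch2 * psi g)" using Lr_rmult[OF c2(3)] .
      ultimately show ?thesis using c3 Lr_trans by blast
    qed
  qed
qed

lemma rightR:
  assumes "b \<in> generated (psi ` (Gamma X - {One}))"
  shows "\<exists>ch. chn ch \<and> Lr u (pr ch) \<Longrightarrow> \<exists>ch. chn ch \<and> Lr (u * b) (pr ch)"
  using assms
proof (induction b arbitrary: u rule: generated.induct)
  case (gen_base a)
  then obtain g where g: "g \<in> Gamma X" "g \<noteq> One" "a = psi g" by auto
  from gen_base obtain ch where ch: "chn ch" "Lr u (pr ch)" by blast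
  obtain ch' where "chn ch'" "Lr (pr ch * psi g) (pr ch')" using genR[OF g(1,2) ch(1)] by blast
  then show ?case using Lr_trans[OF Lr_rmult[OF ch(2)]] g(3) by blast
next
  case (gen_mult a b)
  then show ?case by (metis mult.assoc)
qed

lemma allR: "u \<in> TT \<Longrightarrow> \<exists>ch. chn ch \<and> Lr u (pr ch)"
  unfolding TT_def
proof (induction u rule: generated.induct)
  case (gen_base a)
  then obtain g where g: "g \<in> Gamma X" "g \<noteq> One" "a = psi g" by auto
  then show ?case by (intro exI[of _ "[g]"]) (simp add: Lr_refl)
next
  case (gen_mult a b)
  then show ?case using rightR by blast
qed

lemma pr_reg: "chn ch \<Longrightarrow> \<exists>x\<in>TT. pr ch * x * pr ch = pr ch"
proof (induction ch rule: chn.induct)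
  case 1 then show ?case by simp
next
  case (2 g)
  then show ?case using psi_TT psi_idem by (intro bexI[of _ "psi g"]) auto
next
  case (3 g h rest)
  then obtain x0 where x0: "x0 \<in> TT" "pr (h # rest) * x0 * pr (h # rest) = pr (h # rest)" by auto
  have chh: "chn (h # rest)" using 3 by simp
  have hG: "h \<in> Gamma X" "h \<noteq> One" using chn_hd[OF chh] by auto
  have gh: "g \<in> comps h" using 3 by simp
  define P where "P = pr (h # rest)"
  have prh: "P * psi h = P" using pr_hd[OF chh] P_def by simp
  have ab: "psi h * (psi g * psi h) = psi h" using comp_absorb[OF hG(1) gh] .
  have k: "P * psi g * psi h = P" using prh ab by (metis mult.assoc)
  have "(P * psi g) * (psi h * x0) * (P * psi g) = (P * psi g * psi h) * x0 * P * psi g"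
    by (simp add: mult.assoc)
  also have "\<dots> = P * psi g" using k x0(2) P_def by simp
  finally have "(P * psi g) * (psi h * x0) * (P * psi g) = P * psi g" .
  moreover have "psi h * x0 \<in> TT" using TT_mult psi_TT hG x0(1) by blast
  ultimately show ?case using P_def by auto
qed

lemma TT_regular: "u \<in> TT \<Longrightarrow> \<exists>x\<in>TT. u * x * u = u"
proof -
  assume u: "u \<in> TT"
  obtain ch where ch: "chn ch" "Lr u (pr ch)" using allR[OF u] by blast
  obtain x0 where x0: "x0 \<in> TT" "pr ch * x0 * pr ch = pr ch" using pr_reg[OF ch(1)] by blast
  define p where "p = pr ch"
  have L: "Ldv u p" "Ldv p u" using ch(2) p_def unfolding Lr_def by auto
  show ?thesis
  proof (cases "u = p")
    case True then show ?thesis using x0 p_def by auto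
  next
    case False
    then obtain s where s: "s \<in> TT" "u = s * p" using L(1) unfolding Ldv_def by blast
    obtain t where t: "t \<in> TT" "p = t * u" using L(2) False unfolding Ldv_def by metis
    have "u * (x0 * t) * u = s * (p * x0 * (t * u))" using s(2) by (simp add: mult.assoc)
    also have "\<dots> = s * p" using t(2) x0(2) p_def by simp
    finally have "u * (x0 * t) * u = u" using s(2) by simp
    moreover have "x0 * t \<in> TT" using TT_mult x0(1) t(1) by blast
    ultimately show ?thesis by blast
  qed
qed

end

theorem corollary5p2:
  fixes X :: "'x set" and \<phi> :: "'x gam \<Rightarrow> 'a::semigroup_mult option"
  assumes "X \<noteq> {}" and "skeleton_mapping X \<phi>"
  defines "A \<equiv> {a. Some a \<in> \<phi> ` (Gamma X - {One})}"
  shows "\<phi> ` (Gamma X - {One}) \<subseteq> Some ` UNIV \<and> regular_subsemigroup (generated A)"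
proof -
  interpret skel X \<phi> using assms(2) by unfold_locales
  have P1: "\<phi> ` (Gamma X - {One}) \<subseteq> Some ` UNIV" using phi_psi by auto
  have "A = psi ` (Gamma X - {One})"
  proof
    show "A \<subseteq> psi ` (Gamma X - {One})" unfolding A_def using phi_psi by force
    show "psi ` (Gamma X - {One}) \<subseteq> A" unfolding A_def using phi_psi by force
  qed
  then have GA: "generated A = TT" unfolding TT_def by simp
  have "regular_subsemigroup TT"
    unfolding regular_subsemigroup_def using TT_mult TT_regular by (auto simp: mult.assoc)
  then show ?thesis using P1 GA by simp
qed

end
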